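(* Let $\mathcal{H}$ be a complex infinite-dimensional Hilbert space, let $n>1$ be an integer, and let $A\in B(\mathcal{H})$ satisfy $A^*A^n=A^nA^*$ (equivalently, $A^n$ is normal). Then $A$ is isoloid, i.e. every isolated point of $\sigma(A)$ is an eigenvalue of $A$.
   Context: $B(\mathcal{H})$ denotes the algebra of bounded linear operators on $\mathcal{H}$; $\sigma(A)$ is the spectrum of $A$. *)

theory Defs
  imports "HOL-Analysis.Analysis"
begin

definition hnorm :: "('a \<Rightarrow> 'a \<Rightarrow> complex) \<Rightarrow> 'a \<Rightarrow> real" where
  "hnorm ip x = sqrt (Re (ip x x))"

definition chilbert :: "(complex \<Rightarrow> 'a::ab_group_add \<Rightarrow> 'a) \<Rightarrow> ('a \<Rightarrow> 'a \<Rightarrow> complex) \<Rightarrow> bool" where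
  "chilbert sc ip \<longleftrightarrow>
     (\<forall>x. sc 1 x = x) \<and>
     (\<forall>a b x. sc a (sc b x) = sc (a * b) x) \<and>
     (\<forall>a b x. sc (a + b) x = sc a x + sc b x) \<and>
     (\<forall>a x y. sc a (x + y) = sc a x + sc a y) \<and>
     (\<forall>x y z. ip (x + y) z = ip x z + ip y z) \<and>
     (\<forall>a x y. ip (sc a x) y = a * ip x y) \<and>
     (\<forall>x y. ip y x = cnj (ip x y)) \<and>
     (\<forall>x. x \<noteq> 0 \<longrightarrow> Re (ip x x) > 0) \<and>
     (\<forall>X::nat \<Rightarrow> 'a. (\<forall>e>0. \<exists>N. \<forall>m\<ge>N. \<forall>k\<ge>N. hnorm ip (X m - X k) < e)
        \<longrightarrow> (\<exists>L. (\<lambda>k. hnorm ip (X k - L)) \<longlonglongrightarrow> 0))"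

definition hinfdim :: "(complex \<Rightarrow> 'a::ab_group_add \<Rightarrow> 'a) \<Rightarrow> bool" where
  "hinfdim sc \<longleftrightarrow> \<not> (\<exists>B. finite B \<and> (\<forall>x. \<exists>c. x = (\<Sum>b\<in>B. sc (c b) b)))"

definition hbounded :: "(complex \<Rightarrow> 'a::ab_group_add \<Rightarrow> 'a) \<Rightarrow> ('a \<Rightarrow> 'a \<Rightarrow> complex) \<Rightarrow> ('a \<Rightarrow> 'a) \<Rightarrow> bool" where
  "hbounded sc ip A \<longleftrightarrow>
     (\<forall>x y. A (x + y) = A x + A y) \<and> (\<forall>a x. A (sc a x) = sc a (A x)) \<and>
     (\<exists>K. \<forall>x. hnorm ip (A x) \<le> K * hnorm ip x)"

definition hadj :: "('a \<Rightarrow> 'a \<Rightarrow> complex) \<Rightarrow> ('a \<Rightarrow> 'a) \<Rightarrow> ('a \<Rightarrow> 'a)" where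
  "hadj ip A = (THE B. \<forall>x y. ip (A x) y = ip x (B y))"

definition hspectrum :: "(complex \<Rightarrow> 'a::ab_group_add \<Rightarrow> 'a) \<Rightarrow> ('a \<Rightarrow> 'a \<Rightarrow> complex) \<Rightarrow> ('a \<Rightarrow> 'a) \<Rightarrow> complex set" where
  "hspectrum sc ip A = {l. \<not> (\<exists>B. hbounded sc ip B \<and>
       (\<forall>x. B (A x - sc l x) = x) \<and> (\<forall>x. A (B x) - sc l (B x) = x))}"

definition heigenvalue :: "(complex \<Rightarrow> 'a::ab_group_add \<Rightarrow> 'a) \<Rightarrow> ('a \<Rightarrow> 'a) \<Rightarrow> complex \<Rightarrow> bool" where
  "heigenvalue sc A l \<longleftrightarrow> (\<exists>x. x \<noteq> 0 \<and> A x = sc l x)"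

definition isoloid :: "(complex \<Rightarrow> 'a::ab_group_add \<Rightarrow> 'a) \<Rightarrow> ('a \<Rightarrow> 'a \<Rightarrow> complex) \<Rightarrow> ('a \<Rightarrow> 'a) \<Rightarrow> bool" where
  "isoloid sc ip A \<longleftrightarrow> (\<forall>l. l isolated_in hspectrum sc ip A \<longrightarrow> heigenvalue sc A l)"

end

theory Submission
  imports Defs "HOL-Complex_Analysis.Complex_Analysis" "HOL-Computational_Algebra.Polynomial"
begin

lemma Re_ofr_mult: "Re (complex_of_real r * z) = r * Re z" by simp

locale hs =
  fixes sc :: "complex \<Rightarrow> 'a::ab_group_add \<Rightarrow> 'a" and ip :: "'a \<Rightarrow> 'a \<Rightarrow> complex"
  assumes ch: "chilbert sc ip"
begin

abbreviation nm where "nm \<equiv> hnorm ip"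

lemma sc_one[simp]: "sc 1 x = x" using conjunct1[OF ch[unfolded chilbert_def]] by simp
lemma sc_assoc[simp]: "sc a (sc b x) = sc (a*b) x" using conjunct1[OF conjunct2[OF ch[unfolded chilbert_def]]] by blast
lemma sc_addl: "sc (a+b) x = sc a x + sc b x" using conjunct1[OF conjunct2[OF conjunct2[OF ch[unfolded chilbert_def]]]] by blast
lemma sc_addr: "sc a (x+y) = sc a x + sc a y" using conjunct1[OF conjunct2[OF conjunct2[OF conjunct2[OF ch[unfolded chilbert_def]]]]] by blast
lemma ip_addl: "ip (x+y) z = ip x z + ip y z" using conjunct1[OF conjunct2[OF conjunct2[OF conjunct2[OF conjunct2[OF ch[unfolded chilbert_def]]]]]] by blast
lemma ip_scl[simp]: "ip (sc a x) y = a * ip x y" using conjunct1[OF conjunct2[OF conjunct2[OF conjunct2[OF conjunct2[OF conjunct2[OF ch[unfolded chilbert_def]]]]]]] by blast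
lemma ip_sym: "ip y x = cnj (ip x y)" using conjunct1[OF conjunct2[OF conjunct2[OF conjunct2[OF conjunct2[OF conjunct2[OF conjunct2[OF ch[unfolded chilbert_def]]]]]]]] by blast
lemma ip_pos: "x \<noteq> 0 \<Longrightarrow> Re (ip x x) > 0" using conjunct1[OF conjunct2[OF conjunct2[OF conjunct2[OF conjunct2[OF conjunct2[OF conjunct2[OF conjunct2[OF ch[unfolded chilbert_def]]]]]]]]] by blast
lemma complete: "(\<forall>e>0. \<exists>N. \<forall>m\<ge>N. \<forall>k\<ge>N. nm (X m - X k) < e) \<Longrightarrow> (\<exists>L. (\<lambda>k. nm (X k - L)) \<longlonglongrightarrow> 0)"
  using conjunct2[OF conjunct2[OF conjunct2[OF conjunct2[OF conjunct2[OF conjunct2[OF conjunct2[OF conjunct2[OF ch[unfolded chilbert_def]]]]]]]]] by blast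

lemma sc_zero_l[simp]: "sc 0 x = 0"
proof -
  have "sc (0+0) x = sc 0 x + sc 0 x" by (rule sc_addl)
  thus ?thesis by simp
qed
lemma sc_zero_r[simp]: "sc a 0 = 0"
proof -
  have "sc a (0+0) = sc a 0 + sc a 0" by (rule sc_addr)
  thus ?thesis by simp
qed
lemma sc_minus_r: "sc a (-x) = - sc a x"
proof -
  have "sc a (x + -x) = sc a x + sc a (-x)" by (rule sc_addr)
  thus ?thesis by (simp add: eq_neg_iff_add_eq_0 add.commute)
qed
lemma sc_diff_r: "sc a (x - y) = sc a x - sc a y"
  using sc_addr[of a x "-y"] sc_minus_r by simp
lemma sc_minus_l: "sc (-a) x = - sc a x"
proof -
  have "sc (a + -a) x = sc a x + sc (-a) x" by (rule sc_addl)
  thus ?thesis by (simp add: eq_neg_iff_add_eq_0 add.commute)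
qed
lemma sc_diff_l: "sc (a - b) x = sc a x - sc b x"
  using sc_addl[of a "-b" x] sc_minus_l by simp
lemma sc_neg1: "sc (-1) x = - x" using sc_minus_l[of 1 x] by simp

lemmas sc_simps = sc_addl sc_addr sc_minus_r sc_diff_r sc_minus_l sc_diff_l

lemma ip_zero_l[simp]: "ip 0 y = 0"
proof -
  have "ip (0+0) y = ip 0 y + ip 0 y" by (rule ip_addl)
  thus ?thesis by simp
qed
lemma ip_minus_l: "ip (-x) y = - ip x y"
proof -
  have "ip (x + -x) y = ip x y + ip (-x) y" by (rule ip_addl)
  thus ?thesis by (simp add: eq_neg_iff_add_eq_0 add.commute)
qed
lemma ip_diff_l: "ip (x - y) z = ip x z - ip y z"
  using ip_addl[of x "-y" z] ip_minus_l by simp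
lemma ip_addr: "ip x (y+z) = ip x y + ip x z"
  by (metis ip_sym ip_addl complex_cnj_add)
lemma ip_scr[simp]: "ip x (sc a y) = cnj a * ip x y"
  by (metis ip_sym ip_scl complex_cnj_mult)
lemma ip_zero_r[simp]: "ip x 0 = 0"
  by (metis ip_sym ip_zero_l complex_cnj_zero)
lemma ip_minus_r: "ip x (-y) = - ip x y"
  by (metis ip_sym ip_minus_l complex_cnj_minus)
lemma ip_diff_r: "ip x (y - z) = ip x y - ip x z"
  by (metis ip_sym ip_diff_l complex_cnj_diff)

lemmas ip_simps = ip_addl ip_addr ip_minus_l ip_minus_r ip_diff_l ip_diff_r

lemma ip_self_Im: "Im (ip x x) = 0"
  using ip_sym[of x x] by (metis Im_complex_of_real Reals_cnj_iff complex_is_Real_iff)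
lemma ip_self_real: "ip x x = complex_of_real (Re (ip x x))"
  using ip_self_Im by (simp add: complex_eq_iff)
lemma ip_self_nonneg: "Re (ip x x) \<ge> 0"
proof (cases "x = 0")
  case False thus ?thesis using ip_pos[of x] by simp
next
  case True thus ?thesis by simp
qed
lemma ip_self_eq0: "ip x x = 0 \<longleftrightarrow> x = 0"
proof (cases "x = 0")
  case False thus ?thesis using ip_pos[of x] by auto
qed simp

lemma nm_def': "nm x = sqrt (Re (ip x x))" by (simp add: hnorm_def)
lemma nm_nonneg[simp]: "nm x \<ge> 0" by (simp add: hnorm_def ip_self_nonneg)
lemma nm_sq: "(nm x)^2 = Re (ip x x)" by (simp add: hnorm_def ip_self_nonneg)
lemma ip_self_nm: "ip x x = complex_of_real ((nm x)^2)" by (simp add: nm_sq ip_self_real[symmetric])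
lemma nm_eq0[simp]: "nm x = 0 \<longleftrightarrow> x = 0"
proof (cases "x = 0")
  case False thus ?thesis using ip_pos[of x] by (auto simp: hnorm_def)
qed (simp add: hnorm_def)
lemma nm_pos: "x \<noteq> 0 \<Longrightarrow> nm x > 0" using nm_nonneg[of x] nm_eq0[of x] by linarith
lemma nm_zero[simp]: "nm 0 = 0" by simp

lemma nm_sc: "nm (sc a x) = cmod a * nm x"
proof -
  have "ip (sc a x) (sc a x) = (a * cnj a) * ip x x" by simp
  also have "\<dots> = complex_of_real ((cmod a)^2) * ip x x" by (simp only: complex_norm_square)
  finally have "Re (ip (sc a x) (sc a x)) = (cmod a)^2 * Re (ip x x)"
    by (simp only: Re_ofr_mult)
  hence "(nm (sc a x))^2 = (cmod a * nm x)^2" by (simp add: nm_sq power_mult_distrib)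
  thus ?thesis by (simp add: power2_eq_iff_nonneg)
qed
lemma nm_minus: "nm (-x) = nm x" using nm_sc[of "-1" x] sc_neg1 by simp
lemma nm_commute: "nm (x - y) = nm (y - x)" using nm_minus[of "x-y"] by simp

lemma cauchy_schwarz: "cmod (ip x y) \<le> nm x * nm y"
proof (cases "y = 0")
  case True thus ?thesis by simp
next
  case False
  define b where "b = Re (ip y y)"
  have b: "b > 0" using ip_pos[OF False] b_def by simp
  have ipyy: "ip y y = complex_of_real b" using ip_self_real b_def by simp
  define c where "c = ip x y"
  define t where "t = c / complex_of_real b"
  have "ip (x - sc t y) (x - sc t y) = ip x x - cnj t * c - t * cnj c + t * cnj t * complex_of_real b"
    by (simp add: ip_simps ipyy c_def algebra_simps ip_sym[of y x])
  also have "\<dots> = ip x x - c * cnj c / complex_of_real b"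
    using b by (simp add: t_def field_simps)
  also have "\<dots> = ip x x - complex_of_real ((cmod c)^2 / b)"
    by (simp only: complex_norm_square of_real_divide)
  finally have "0 \<le> Re (ip x x) - (cmod c)^2 / b" using ip_self_nonneg[of "x - sc t y"] by simp
  hence "(cmod c)^2 \<le> Re (ip x x) * b" using b by (simp add: field_simps)
  hence "(cmod c)^2 \<le> (nm x * nm y)^2" by (simp add: power_mult_distrib nm_sq b_def)
  thus ?thesis unfolding c_def by (rule power2_le_imp_le) simp
qed

lemma nm_triangle: "nm (x + y) \<le> nm x + nm y"
proof -
  have "Re (ip (x+y) (x+y)) = Re (ip x x) + 2 * Re (ip x y) + Re (ip y y)"
    by (simp add: ip_simps ip_sym[of y x])
  also have "\<dots> \<le> (nm x)^2 + 2 * (nm x * nm y) + (nm y)^2"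
    using cauchy_schwarz[of x y] complex_Re_le_cmod[of "ip x y"] by (simp add: nm_sq)
  also have "\<dots> = (nm x + nm y)^2" by (simp add: power2_eq_square algebra_simps)
  finally have "(nm (x+y))^2 \<le> (nm x + nm y)^2" by (simp add: nm_sq)
  thus ?thesis by (rule power2_le_imp_le) simp
qed
lemma nm_triangle_diff: "nm (x - z) \<le> nm (x - y) + nm (y - z)"
  using nm_triangle[of "x-y" "y-z"] by simp
lemma nm_diff_le: "nm (x - y) \<le> nm x + nm y"
  using nm_triangle[of x "-y"] nm_minus[of y] by simp
lemma nm_rev_triangle: "nm x - nm y \<le> nm (x - y)"
  using nm_triangle[of "x-y" y] by simp

lemma ip_all_zero: "(\<And>w. ip x w = 0) \<Longrightarrow> x = 0"
  using ip_self_eq0 by blast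
lemma ip_ext: "(\<And>w. ip x w = ip y w) \<Longrightarrow> x = y"
  using ip_all_zero[of "x - y"] by (simp add: ip_diff_l)
lemma ip_ext_r: "(\<And>w. ip w x = ip w y) \<Longrightarrow> x = y"
  using ip_ext[of x y] by (metis ip_sym)

lemma nm_bound_by_ip: assumes "C \<ge> 0" "\<And>w. cmod (ip x w) \<le> C * nm w" shows "nm x \<le> C"
proof (cases "x = 0")
  case True thus ?thesis using assms by simp
next
  case False
  have "cmod (ip x x) = (nm x)^2" by (simp add: ip_self_nm norm_power)
  hence "(nm x)^2 \<le> C * nm x" using assms(2)[of x] by simp
  thus ?thesis using nm_pos[OF False] by (simp add: power2_eq_square)
qed

end

context hs begin

lemma proj_ip: assumes "ip z z = complex_of_real b" "b > 0"
  shows "ip (y - sc (ip y z / complex_of_real b) z) (y - sc (ip y z / complex_of_real b) z)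
         = ip y y - complex_of_real ((cmod (ip y z))^2 / b)"
proof -
  define c where "c = ip y z"
  define t where "t = c / complex_of_real b"
  have "ip (y - sc t z) (y - sc t z) = ip y y - cnj t * c - t * cnj c + t * cnj t * complex_of_real b"
    by (simp add: ip_simps assms(1) c_def algebra_simps ip_sym[of z y])
  also have "\<dots> = ip y y - c * cnj c / complex_of_real b"
    using assms(2) by (simp add: t_def field_simps)
  also have "\<dots> = ip y y - complex_of_real ((cmod c)^2 / b)"
    by (simp only: complex_norm_square of_real_divide)
  finally show ?thesis by (simp add: c_def t_def)
qed

lemma parallelogram: "(nm (u+v))^2 + (nm (u-v))^2 = 2*(nm u)^2 + 2*(nm v)^2"
proof -
  have "ip (u+v) (u+v) + ip (u-v) (u-v) = 2 * ip u u + 2 * ip v v"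
    by (simp add: ip_simps algebra_simps)
  hence "Re (ip (u+v) (u+v) + ip (u-v) (u-v)) = Re (2 * ip u u + 2 * ip v v)" by simp
  thus ?thesis by (simp add: nm_sq)
qed

lemma sc_two: "sc 2 x = x + x"
  using sc_addl[of 1 1 x] by (simp add: one_add_one)

lemma riesz:
  fixes \<phi> :: "'a \<Rightarrow> complex"
  assumes add: "\<And>x y. \<phi> (x+y) = \<phi> x + \<phi> y" and scl: "\<And>a x. \<phi> (sc a x) = a * \<phi> x"
    and bd: "\<And>x. cmod (\<phi> x) \<le> K * nm x"
  shows "\<exists>v. \<forall>x. \<phi> x = ip x v"
proof (cases "\<forall>x. \<phi> x = 0")
  case True thus ?thesis by (intro exI[of _ 0]) simp
next
  case False
  then obtain x0 where x0: "\<phi> x0 \<noteq> 0" by blast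
  have phi0: "\<phi> 0 = 0" using add[of 0 0] by simp
  have phiminus: "\<phi> (-x) = - \<phi> x" for x
  proof -
    have "\<phi> x + \<phi> (-x) = 0" using add[of x "-x"] phi0 by simp
    thus ?thesis by (simp add: add_eq_0_iff)
  qed
  have phidiff: "\<phi> (x - y) = \<phi> x - \<phi> y" for x y using add[of x "-y"] phiminus[of y] by simp
  define D where "D = {nm (x0 - z) | z. \<phi> z = 0}"
  define d where "d = Inf D"
  have Dne: "D \<noteq> {}" using phi0 unfolding D_def by blast
  have Dbdd: "bdd_below D" unfolding D_def by (rule bdd_belowI[of _ 0]) auto
  have dlow: "d \<le> nm (x0 - z)" if "\<phi> z = 0" for z
    unfolding d_def by (rule cInf_lower[OF _ Dbdd]) (use that D_def in blast)
  have d0: "d \<ge> 0" unfolding d_def by (rule cInf_greatest[OF Dne]) (auto simp: D_def)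
  have "\<exists>z. \<phi> z = 0 \<and> nm (x0 - z) < d + 1/(real k+1)" for k
  proof -
    have "Inf D < d + 1/(real k+1)" unfolding d_def by simp
    then obtain t where "t \<in> D" "t < d + 1/(real k+1)" using cInf_lessD[OF Dne] by blast
    thus ?thesis unfolding D_def by blast
  qed
  then obtain Zs where Zs: "\<And>k. \<phi> (Zs k) = 0" "\<And>k. nm (x0 - Zs k) < d + 1/(real k+1)" by metis
  define eps where "eps = (\<lambda>k::nat. 1/(real k+1))"
  have eps01: "0 < eps k" "eps k \<le> 1" for k unfolding eps_def by (auto simp: field_simps)
  have sqbound: "(nm (Zs m - Zs k))^2 \<le> (4*d+4) * (eps m + eps k)" for m k
  proof -
    define mid where "mid = sc (1/2) (Zs m + Zs k)"
    have phimid: "\<phi> mid = 0" unfolding mid_def using scl add Zs(1) by simp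
    have "(x0 - Zs m) + (x0 - Zs k) = sc 2 (x0 - mid)"
      unfolding mid_def by (simp add: sc_simps sc_two algebra_simps)
    hence n1: "nm ((x0 - Zs m) + (x0 - Zs k)) = 2 * nm (x0 - mid)" by (simp add: nm_sc)
    have n2: "(x0 - Zs m) - (x0 - Zs k) = Zs k - Zs m" by simp
    have P: "(nm (Zs k - Zs m))^2 = 2*(nm (x0 - Zs m))^2 + 2*(nm (x0 - Zs k))^2 - 4 * (nm (x0 - mid))^2"
      using parallelogram[of "x0 - Zs m" "x0 - Zs k"] unfolding n1 n2 by (simp add: power_mult_distrib)
    have a: "nm (x0 - Zs m) \<le> d + eps m" "nm (x0 - Zs k) \<le> d + eps k"
      using Zs(2) unfolding eps_def by (auto intro: less_imp_le)
    have b: "d \<le> nm (x0 - mid)" using dlow[OF phimid] .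
    have "(nm (x0 - Zs m))^2 \<le> (d + eps m)^2" using a(1) by (intro power_mono) auto
    moreover have "(nm (x0 - Zs k))^2 \<le> (d + eps k)^2" using a(2) by (intro power_mono) auto
    moreover have "d^2 \<le> (nm (x0 - mid))^2" using b d0 by (intro power_mono) auto
    ultimately have "(nm (Zs k - Zs m))^2 \<le> 2*(d + eps m)^2 + 2*(d + eps k)^2 - 4*d^2" using P by linarith
    also have "\<dots> = 4*d*(eps m + eps k) + 2*(eps m)^2 + 2*(eps k)^2" by (simp add: power2_eq_square algebra_simps)
    also have "\<dots> \<le> (4*d+4) * (eps m + eps k)"
    proof -
      have "(eps m)^2 \<le> eps m" "(eps k)^2 \<le> eps k" using eps01 by (auto simp: power2_eq_square mult_le_cancel_left1 intro: mult_left_le_one_le)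
      thus ?thesis using eps01[of m] eps01[of k] by (simp add: algebra_simps)
    qed
    finally show ?thesis by (simp add: nm_commute)
  qed
  have cauchy: "\<forall>e>0. \<exists>N. \<forall>m\<ge>N. \<forall>k\<ge>N. nm (Zs m - Zs k) < e"
  proof (intro allI impI)
    fix e :: real assume e: "e > 0"
    obtain N :: nat where N: "(8*d+8) / (e^2) < real N + 1"
      using reals_Archimedean2[of "(8*d+8) / (e^2)"] by (metis add.commute add_strict_increasing zero_less_one less_imp_le)
    have "(8*d+8) < e^2 * (real N + 1)" using N e by (simp add: field_simps)
    hence Ne: "(8*d+8) / (real N + 1) < e^2" by (simp add: field_simps)
    show "\<exists>N. \<forall>m\<ge>N. \<forall>k\<ge>N. nm (Zs m - Zs k) < e"
    proof (intro exI[of _ N] allI impI)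
      fix m k assume mk: "N \<le> m" "N \<le> k"
      have em: "eps m \<le> 1/(real N+1)" "eps k \<le> 1/(real N+1)" unfolding eps_def using mk
        by (auto simp: field_simps)
      have "(nm (Zs m - Zs k))^2 \<le> (4*d+4) * (eps m + eps k)" by (rule sqbound)
      also have "\<dots> \<le> (4*d+4) * (2/(real N+1))" using em d0 by (intro mult_left_mono) auto
      also have "\<dots> = (8*d+8) / (real N + 1)" by (simp add: field_simps)
      also have "\<dots> < e^2" by (rule Ne)
      finally show "nm (Zs m - Zs k) < e" using e by (simp add: power_less_imp_less_base less_imp_le)
    qed
  qed
  obtain L where L: "(\<lambda>k. nm (Zs k - L)) \<longlonglongrightarrow> 0" using complete[OF cauchy] by blast
  have phiL: "\<phi> L = 0"
  proof -
    have "cmod (\<phi> L) \<le> K * nm (Zs k - L)" for k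
      using bd[of "L - Zs k"] phidiff[of L "Zs k"] Zs(1)[of k] nm_commute[of L "Zs k"] by simp
    moreover have "(\<lambda>k. K * nm (Zs k - L)) \<longlonglongrightarrow> 0" using tendsto_mult_right_zero[OF L] by simp
    ultimately have "cmod (\<phi> L) \<le> 0" by (intro LIMSEQ_le_const[of "\<lambda>k. K * nm (Zs k - L)"]) auto
    thus ?thesis by simp
  qed
  define y where "y = x0 - L"
  have ymin: "nm y \<le> nm (x0 - z)" if "\<phi> z = 0" for z
  proof -
    have yb: "nm y \<le> d + eps k + nm (Zs k - L)" for k
    proof -
      have "nm y \<le> nm (x0 - Zs k) + nm (Zs k - L)" unfolding y_def by (rule nm_triangle_diff)
      thus ?thesis using Zs(2)[of k] unfolding eps_def by linarith
    qed
    have epsl: "(\<lambda>k. eps k) \<longlonglongrightarrow> 0" unfolding eps_def using LIMSEQ_Suc[OF lim_1_over_n] by (simp add: add.commute)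
    have yl: "(\<lambda>k. d + eps k + nm (Zs k - L)) \<longlonglongrightarrow> d + 0 + 0"
      by (intro tendsto_add tendsto_const L epsl)
    have "nm y \<le> d" using yb yl by (intro LIMSEQ_le_const[of "\<lambda>k. d + eps k + nm (Zs k - L)"]) auto
    thus ?thesis using dlow[OF that] by linarith
  qed
  have phiy: "\<phi> y = \<phi> x0" unfolding y_def using phidiff phiL by simp
  have yne: "y \<noteq> 0" using phiy x0 phi0 by auto
  have orth: "ip y z = 0" if "\<phi> z = 0" for z
  proof (rule ccontr)
    assume c: "ip y z \<noteq> 0"
    hence zne: "z \<noteq> 0" by auto
    define b where "b = Re (ip z z)"
    have b: "b > 0" "ip z z = complex_of_real b" using ip_pos[OF zne] ip_self_real b_def by auto
    define t where "t = ip y z / complex_of_real b"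
    have "\<phi> (L + sc t z) = 0" using add scl phiL that by simp
    hence "nm y \<le> nm (x0 - (L + sc t z))" by (rule ymin)
    also have "x0 - (L + sc t z) = y - sc t z" unfolding y_def by simp
    finally have "(nm y)^2 \<le> (nm (y - sc t z))^2" by (intro power_mono) auto
    also have "\<dots> = Re (ip y y) - (cmod (ip y z))^2 / b"
      using proj_ip[OF b(2) b(1), of y] unfolding t_def nm_sq by simp
    finally have "(cmod (ip y z))^2 / b \<le> 0" by (simp add: nm_sq)
    moreover have "(cmod (ip y z))^2 / b > 0" using c b by simp
    ultimately show False by simp
  qed
  have ipyy: "ip y y \<noteq> 0" using yne ip_self_eq0 by simp
  define v where "v = sc (cnj (\<phi> y / ip y y)) y"
  show ?thesis
  proof (intro exI[of _ v] allI)
    fix x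
    define w where "w = x - sc (\<phi> x / \<phi> y) y"
    have "\<phi> w = 0" unfolding w_def using phidiff scl phiy x0 by simp
    hence "ip w y = 0" using orth ip_sym by (metis complex_cnj_zero)
    hence "ip x y = (\<phi> x / \<phi> y) * ip y y" unfolding w_def by (simp add: ip_simps)
    thus "\<phi> x = ip x v" unfolding v_def using ipyy phiy x0 by (simp add: field_simps)
  qed
qed

end

context hs begin

definition islin :: "('a \<Rightarrow> 'a) \<Rightarrow> bool" where
  "islin A \<longleftrightarrow> (\<forall>x y. A (x+y) = A x + A y) \<and> (\<forall>a x. A (sc a x) = sc a (A x))"

lemma islin_add: "islin A \<Longrightarrow> A (x+y) = A x + A y" unfolding islin_def by blast
lemma islin_sc: "islin A \<Longrightarrow> A (sc a x) = sc a (A x)" unfolding islin_def by blast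
lemma islin_zero: "islin A \<Longrightarrow> A 0 = 0" using islin_add[of A 0 0] by simp
lemma islin_minus: "islin A \<Longrightarrow> A (-x) = - A x"
  using islin_add[of A x "-x"] islin_zero[of A] by (simp add: add_eq_0_iff)
lemma islin_diff: "islin A \<Longrightarrow> A (x - y) = A x - A y"
  using islin_add[of A x "-y"] islin_minus[of A y] by simp
lemmas islin_simps = islin_add islin_sc islin_zero islin_minus islin_diff

lemma hb_islin: "hbounded sc ip A \<Longrightarrow> islin A" unfolding hbounded_def islin_def by blast
lemma hb_bound: assumes "hbounded sc ip A" obtains K where "K > 0" "\<And>x. nm (A x) \<le> K * nm x"
proof -
  obtain K where K: "\<And>x. nm (A x) \<le> K * nm x" using assms unfolding hbounded_def by blast
  have "nm (A x) \<le> max K 1 * nm x" for x using K[of x] by (smt (verit) mult_right_mono nm_nonneg)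
  thus ?thesis using that[of "max K 1"] by simp
qed

lemma adj_exists: assumes "hbounded sc ip A" shows "\<exists>B. \<forall>x y. ip (A x) y = ip x (B y)"
proof -
  have lin: "islin A" using hb_islin[OF assms] .
  obtain K where K: "K > 0" "\<And>x. nm (A x) \<le> K * nm x" using hb_bound[OF assms] by blast
  have "\<exists>v. \<forall>x. ip (A x) y = ip x v" for y
  proof (rule riesz[where K="K * nm y"])
    show "ip (A (x + z)) y = ip (A x) y + ip (A z) y" for x z using lin by (simp add: islin_simps ip_simps)
    show "ip (A (sc a x)) y = a * ip (A x) y" for a x using lin by (simp add: islin_simps)
    show "cmod (ip (A x) y) \<le> K * nm y * nm x" for x
    proof -
      have "cmod (ip (A x) y) \<le> nm (A x) * nm y" by (rule cauchy_schwarz)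
      also have "\<dots> \<le> K * nm x * nm y" using K(2)[of x] by (intro mult_right_mono) auto
      finally show ?thesis by (simp add: algebra_simps)
    qed
  qed
  thus ?thesis by metis
qed

lemma adj: assumes "hbounded sc ip A" shows "ip (A x) y = ip x (hadj ip A y)"
proof -
  obtain B where B: "\<forall>x y. ip (A x) y = ip x (B y)" using adj_exists[OF assms] by blast
  have "\<forall>x y. ip (A x) y = ip x (hadj ip A y)"
    unfolding hadj_def
  proof (rule theI[of _ B])
    show "\<forall>x y. ip (A x) y = ip x (B y)" by (rule B)
    fix C assume C: "\<forall>x y. ip (A x) y = ip x (C y)"
    show "C = B"
    proof
      fix y show "C y = B y" using C B by (intro ip_ext_r) metis
    qed
  qed
  thus ?thesis by blast
qed

lemma adj_islin: assumes "hbounded sc ip A" shows "islin (hadj ip A)"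
  unfolding islin_def
proof (intro conjI allI)
  fix x y show "hadj ip A (x + y) = hadj ip A x + hadj ip A y"
    by (rule ip_ext_r) (simp add: adj[OF assms, symmetric] ip_simps)
next
  fix a x show "hadj ip A (sc a x) = sc a (hadj ip A x)"
    by (rule ip_ext_r) (simp add: adj[OF assms, symmetric])
qed

lemma adj_funpow: assumes "hbounded sc ip A" shows "ip ((A^^n) x) y = ip x ((hadj ip A ^^ n) y)"
proof (induction n arbitrary: x)
  case 0 thus ?case by simp
next
  case (Suc n)
  have "ip ((A^^Suc n) x) y = ip ((A^^n) (A x)) y" by (simp add: funpow_Suc_right del: funpow.simps)
  also have "\<dots> = ip (A x) ((hadj ip A ^^ n) y)" by (rule Suc.IH)
  also have "\<dots> = ip x (hadj ip A ((hadj ip A ^^ n) y))" by (rule adj[OF assms])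
  finally show ?case by simp
qed

lemma islin_funpow: "islin A \<Longrightarrow> islin (A^^n)"
  by (induction n) (auto simp: islin_def)

definition opoly :: "complex poly \<Rightarrow> ('a \<Rightarrow> 'a) \<Rightarrow> 'a \<Rightarrow> 'a" where
  "opoly p A x = fold_coeffs (\<lambda>a y. sc a x + A y) p 0"

lemma opoly_0[simp]: "opoly 0 A x = 0" by (simp add: opoly_def)

lemma opoly_pCons: assumes "islin A" shows "opoly (pCons a p) A x = sc a x + A (opoly p A x)"
proof (cases "p = 0")
  case True
  show ?thesis
  proof (cases "a = 0")
    case True thus ?thesis using \<open>p = 0\<close> assms by (simp add: islin_zero)
  next
    case False thus ?thesis using \<open>p = 0\<close> by (simp add: opoly_def)
  qed
next
  case False thus ?thesis by (simp add: opoly_def)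
qed

lemma opoly_const: "islin A \<Longrightarrow> opoly [:c:] A x = sc c x"
  by (simp add: opoly_pCons islin_zero)
lemma opoly_X: "islin A \<Longrightarrow> opoly [:0,1:] A x = A x"
  by (simp add: opoly_pCons islin_zero)

lemma opoly_add: assumes "islin A" shows "opoly (p+q) A x = opoly p A x + opoly q A x"
proof (induction p arbitrary: q rule: pCons_induct)
  case 0 thus ?case by simp
next
  case (pCons a p)
  obtain b q' where q: "q = pCons b q'" by (cases q)
  have "opoly (pCons a p + q) A x = sc (a+b) x + A (opoly (p+q') A x)" unfolding q using assms by (simp add: opoly_pCons)
  also have "\<dots> = sc (a+b) x + A (opoly p A x + opoly q' A x)" using pCons.IH[of q'] by simp
  also have "\<dots> = opoly (pCons a p) A x + opoly q A x" unfolding q using assms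
    by (simp add: opoly_pCons islin_add sc_addl algebra_simps)
  finally show ?case .
qed

lemma opoly_smult: assumes "islin A" shows "opoly (smult c p) A x = sc c (opoly p A x)"
proof (induction p rule: pCons_induct)
  case 0 thus ?case by simp
next
  case (pCons a p)
  thus ?case using assms by (simp add: opoly_pCons islin_sc sc_addr)
qed

lemma opoly_minus: assumes "islin A" shows "opoly (-p) A x = - opoly p A x"
  using opoly_smult[OF assms, of "-1" p x] by (simp add: sc_neg1)
lemma opoly_diff: assumes "islin A" shows "opoly (p - q) A x = opoly p A x - opoly q A x"
  using opoly_add[OF assms, of p "-q" x] opoly_minus[OF assms, of q x] by simp

lemma opoly_islin: assumes "islin A" shows "islin (opoly p A)"
proof (induction p rule: pCons_induct)
  case 0 thus ?case by (simp add: islin_def)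
next
  case (pCons a p)
  have "opoly (pCons a p) A (x + y) = opoly (pCons a p) A x + opoly (pCons a p) A y" for x y
    using assms pCons by (simp add: opoly_pCons sc_addr islin_simps algebra_simps)
  moreover have "opoly (pCons a p) A (sc c x) = sc c (opoly (pCons a p) A x)" for c x
    using assms pCons by (simp add: opoly_pCons sc_addr islin_simps mult.commute)
  ultimately show ?case unfolding islin_def by blast
qed

lemma opoly_comm: assumes "islin A" "islin B" "\<And>y. B (A y) = A (B y)"
  shows "B (opoly p A x) = opoly p A (B x)"
proof (induction p rule: pCons_induct)
  case 0 thus ?case using assms by (simp add: islin_zero)
next
  case (pCons a p)
  thus ?case using assms by (simp add: opoly_pCons islin_simps)
qed

lemma opoly_mult: assumes "islin A" shows "opoly (p*q) A x = opoly p A (opoly q A x)"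
proof (induction p rule: pCons_induct)
  case 0 thus ?case by simp
next
  case (pCons a p)
  thus ?case using assms by (simp add: opoly_pCons opoly_add opoly_smult)
qed

lemma opoly_power: assumes "islin A" shows "opoly (p^k) A x = (opoly p A ^^ k) x"
proof (induction k arbitrary: x)
  case 0 thus ?case using assms opoly_const[OF assms, of 1] by (simp add: pCons_one)
next
  case (Suc k)
  thus ?case using assms by (simp add: opoly_mult)
qed

lemma opoly_Xpow: assumes "islin A" shows "opoly ([:0,1:]^n) A x = (A^^n) x"
proof -
  have "opoly [:0,1:] A = A" using opoly_X[OF assms] by auto
  thus ?thesis using opoly_power[OF assms] by metis
qed

end

locale spec = hs +
  fixes A :: "'a \<Rightarrow> 'a" and l :: complex and r0 :: real
  assumes hbA: "hbounded sc ip A" and r0: "r0 > 0"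
    and resolv: "\<And>z. z \<in> ball l r0 - {l} \<Longrightarrow> z \<notin> hspectrum sc ip A"
begin

abbreviation "Om \<equiv> ball l r0 - {l}"

definition R :: "complex \<Rightarrow> 'a \<Rightarrow> 'a" where
  "R z = (SOME B. hbounded sc ip B \<and> (\<forall>x. B (A x - sc z x) = x) \<and> (\<forall>x. A (B x) - sc z (B x) = x))"

lemma linA: "islin A" using hb_islin[OF hbA] .

lemma R_props: assumes "z \<in> Om"
  shows "hbounded sc ip (R z)" "\<And>x. R z (A x - sc z x) = x" "\<And>x. A (R z x) - sc z (R z x) = x"
proof -
  have "\<exists>B. hbounded sc ip B \<and> (\<forall>x. B (A x - sc z x) = x) \<and> (\<forall>x. A (B x) - sc z (B x) = x)"
    using resolv[OF assms] unfolding hspectrum_def by blast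
  hence "hbounded sc ip (R z) \<and> (\<forall>x. R z (A x - sc z x) = x) \<and> (\<forall>x. A (R z x) - sc z (R z x) = x)"
    unfolding R_def by (rule someI_ex)
  thus "hbounded sc ip (R z)" "\<And>x. R z (A x - sc z x) = x" "\<And>x. A (R z x) - sc z (R z x) = x" by auto
qed

lemma R_lin: "z \<in> Om \<Longrightarrow> islin (R z)" using hb_islin R_props(1) by blast

lemma R_A: assumes "z \<in> Om" shows "A (R z x) = x + sc z (R z x)"
  using R_props(3)[OF assms, of x] by (simp add: algebra_simps)

lemma R_comm: assumes "z \<in> Om" shows "R z (A x) = A (R z x)"
proof -
  have "R z (A x) = R z ((A x - sc z x) + sc z x)" by simp
  also have "\<dots> = R z (A x - sc z x) + R z (sc z x)" using R_lin[OF assms] by (simp add: islin_simps)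
  also have "\<dots> = x + sc z (R z x)" using R_lin[OF assms] R_props(2)[OF assms] by (simp add: islin_simps)
  finally show ?thesis using R_A[OF assms] by simp
qed

lemma R_ident: assumes "z \<in> Om" "y \<in> Om" shows "R y v - R z v = sc (y - z) (R y (R z v))"
proof -
  define u where "u = R z v"
  have "A u - sc z u = v" unfolding u_def by (rule R_props(3)[OF assms(1)])
  hence "v = (A u - sc y u) + sc (y - z) u" by (simp add: sc_simps algebra_simps)
  hence "R y v = u + sc (y - z) (R y u)" using R_lin[OF assms(2)] R_props(2)[OF assms(2)] by (simp add: islin_simps)
  thus ?thesis unfolding u_def by simp
qed

lemma R_bound: assumes "z \<in> Om" obtains K where "K > 0" "\<And>v. nm (R z v) \<le> K * nm v"
  using hb_bound[OF R_props(1)[OF assms]] by blast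

lemma A_bound: obtains KA where "KA > 0" "\<And>v. nm (A v) \<le> KA * nm v"
  using hb_bound[OF hbA] by blast

lemma R_local: assumes "z \<in> Om" "y \<in> Om" "K > 0" "\<And>v. nm (R z v) \<le> K * nm v" "cmod (y - z) \<le> 1/(2*K)"
  shows "nm (R y v) \<le> 2*K * nm v"
proof -
  define u where "u = R y v"
  have "u = R z (A u - sc z u)" using R_props(2)[OF assms(1)] by simp
  hence "nm u \<le> K * nm (A u - sc z u)" using assms(4) by metis
  also have "A u - sc z u = v + sc (y - z) u" using R_props(3)[OF assms(2), of v] unfolding u_def
    by (simp add: sc_simps algebra_simps)
  also have "K * nm (v + sc (y - z) u) \<le> K * (nm v + cmod (y - z) * nm u)"
    using nm_triangle[of v "sc (y-z) u"] assms(3) by (simp add: nm_sc)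
  also have "\<dots> \<le> K * nm v + K * (1/(2*K)) * nm u"
  proof -
    have "cmod (y - z) * nm u \<le> 1/(2*K) * nm u" using assms(5) by (intro mult_right_mono) auto
    hence "K * (cmod (y - z) * nm u) \<le> K * (1/(2*K) * nm u)" using assms(3) by (intro mult_left_mono) auto
    hence "K * (cmod (y - z) * nm u) \<le> K * (1/(2*K)) * nm u" by (simp only: mult.assoc)
    thus ?thesis by (simp only: distrib_left mult.assoc add_left_mono)
  qed
  also have "\<dots> = K * nm v + nm u / 2" using assms(3) by simp
  finally show ?thesis unfolding u_def by simp
qed

lemma open_Om: "open Om" by (simp add: open_Diff)

lemma R_lip: assumes "z \<in> Om" "y \<in> Om" "K > 0" "\<And>v. nm (R z v) \<le> K * nm v" "cmod (y - z) \<le> 1/(2*K)"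
  shows "nm (R y v - R z v) \<le> cmod (y - z) * (2*K*K) * nm v"
proof -
  have "nm (R y v - R z v) = cmod (y - z) * nm (R y (R z v))" using R_ident[OF assms(1,2)] by (simp add: nm_sc)
  also have "\<dots> \<le> cmod (y - z) * (2*K * nm (R z v))"
    using R_local[OF assms] by (intro mult_left_mono) auto
  also have "\<dots> \<le> cmod (y - z) * (2*K * (K * nm v))"
    using assms(3,4) by (intro mult_left_mono) auto
  finally show ?thesis by (simp add: algebra_simps)
qed

definition f :: "'a \<Rightarrow> 'a \<Rightarrow> complex \<Rightarrow> complex" where "f u w z = ip (R z u) w"

lemma f_tendsto: assumes "z \<in> Om" shows "((\<lambda>y. ip (R y v) w) \<longlongrightarrow> ip (R z v) w) (at z)"
proof -
  obtain K where K: "K > 0" "\<And>v. nm (R z v) \<le> K * nm v" using R_bound[OF assms] by blast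
  obtain d0 where d0: "d0 > 0" "ball z d0 \<subseteq> Om" using open_Om assms open_contains_ball by blast
  define C where "C = 2*K*K * nm v * nm w + 1"
  have C: "C > 0" unfolding C_def using K by (simp add: add_nonneg_pos)
  show ?thesis unfolding tendsto_iff
  proof (intro allI impI)
    fix e :: real assume e: "e > 0"
    define d where "d = min (min d0 (1/(2*K))) (e / C)"
    have d: "d > 0" unfolding d_def using d0 K e C by auto
    show "\<forall>\<^sub>F y in at z. dist (ip (R y v) w) (ip (R z v) w) < e"
      unfolding eventually_at
    proof (intro exI[of _ d] conjI d ballI impI)
      fix y assume y: "y \<in> UNIV" "y \<noteq> z \<and> dist y z < d"
      have "y \<in> ball z d0" using y unfolding d_def by (simp add: dist_commute)
      hence yOm: "y \<in> Om" using d0(2) by blast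
      have yz: "cmod (y - z) \<le> 1/(2*K)" "cmod (y - z) < e / C" "cmod (y - z) > 0"
        using y unfolding d_def dist_norm by auto
      have "dist (ip (R y v) w) (ip (R z v) w) = cmod (ip (R y v - R z v) w)" by (simp add: dist_norm ip_simps)
      also have "\<dots> \<le> nm (R y v - R z v) * nm w" by (rule cauchy_schwarz)
      also have "\<dots> \<le> cmod (y - z) * (2*K*K) * nm v * nm w"
        using R_lip[OF assms yOm K yz(1)] by (intro mult_right_mono) auto
      also have "\<dots> \<le> cmod (y - z) * C" unfolding C_def by (simp add: algebra_simps)
      also have "\<dots> < e / C * C" using yz(2) C by (intro mult_strict_right_mono) auto
      also have "\<dots> = e" using C by simp
      finally show "dist (ip (R y v) w) (ip (R z v) w) < e" .
    qed
  qed
qed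

lemma f_deriv: assumes "z \<in> Om" shows "(f u w has_field_derivative ip (R z (R z u)) w) (at z)"
  unfolding has_field_derivative_iff
proof (rule Lim_transform_eventually[OF f_tendsto[OF assms]])
  obtain d0 where d0: "d0 > 0" "ball z d0 \<subseteq> Om" using open_Om assms open_contains_ball by blast
  show "\<forall>\<^sub>F y in at z. ip (R y (R z u)) w = (f u w y - f u w z) / (y - z)"
    unfolding eventually_at
  proof (intro exI[of _ d0] conjI d0 ballI impI)
    fix y assume y: "y \<in> UNIV" "y \<noteq> z \<and> dist y z < d0"
    have "y \<in> ball z d0" using y by (simp add: dist_commute)
    hence yOm: "y \<in> Om" using d0(2) by blast
    have "f u w y - f u w z = (y - z) * ip (R y (R z u)) w"
      unfolding f_def using R_ident[OF assms yOm, of u] by (simp add: ip_simps[symmetric])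
    thus "ip (R y (R z u)) w = (f u w y - f u w z) / (y - z)" using y by simp
  qed
qed

lemma f_holo: "f u w holomorphic_on Om"
  unfolding holomorphic_on_def field_differentiable_def
  using f_deriv has_field_derivative_at_within by blast

end

lemma compact_unif_bound:
  fixes S :: "'b::metric_space set" and Q :: "'b \<Rightarrow> real \<Rightarrow> bool"
  assumes "compact S" and loc: "\<And>x. x \<in> S \<Longrightarrow> \<exists>e>0. \<exists>M. \<forall>y\<in>S. dist y x < e \<longrightarrow> Q y M"
  and mono: "\<And>y M M'. Q y M \<Longrightarrow> M \<le> M' \<Longrightarrow> Q y M'"
  shows "\<exists>M. \<forall>y\<in>S. Q y M"
proof -
  obtain E Mf where EM: "\<And>x. x \<in> S \<Longrightarrow> E x > 0 \<and> (\<forall>y\<in>S. dist y x < E x \<longrightarrow> Q y (Mf x))"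
    using loc by metis
  have cov: "S \<subseteq> (\<Union>x\<in>S. ball x (E x))" using EM by force
  obtain C' where C': "C' \<subseteq> S" "finite C'" "S \<subseteq> (\<Union>c\<in>C'. ball c (E c))"
    using compactE_image[OF assms(1), of S "\<lambda>x. ball x (E x)"] cov by blast
  define M where "M = Max (insert 0 (Mf ` C'))"
  have "Q y M" if y: "y \<in> S" for y
  proof -
    obtain c where c: "c \<in> C'" "y \<in> ball c (E c)" using C'(3) y by blast
    have "Q y (Mf c)" using EM[of c] c C'(1) y by (auto simp: dist_commute)
    moreover have "Mf c \<le> M" unfolding M_def using C'(2) c(1) by (intro Max_ge) auto
    ultimately show ?thesis by (rule mono)
  qed
  thus ?thesis by blast
qed

context spec begin

lemma sphere_Om: assumes "0 < r" "r < r0" "cmod (z - l) = r" shows "z \<in> Om"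
  using assms by (auto simp: dist_norm norm_minus_commute)

lemma sphere_bound: assumes "0 < r" "r < r0"
  obtains M where "M > 0" "\<And>z v. cmod (z - l) = r \<Longrightarrow> nm (R z v) \<le> M * nm v"
proof -
  have "\<exists>M. \<forall>y\<in>sphere l r. \<forall>v. nm (R y v) \<le> M * nm v"
  proof (rule compact_unif_bound[where Q="\<lambda>y M. \<forall>v. nm (R y v) \<le> M * nm v"])
    show "compact (sphere l r)" by simp
  next
    fix x assume x: "x \<in> sphere l r"
    hence xOm: "x \<in> Om" using assms by (intro sphere_Om) (auto simp: dist_norm norm_minus_commute)
    obtain K where K: "K > 0" "\<And>v. nm (R x v) \<le> K * nm v" using R_bound[OF xOm] by blast
    have "\<forall>y\<in>sphere l r. dist y x < 1/(2*K) \<longrightarrow> (\<forall>v. nm (R y v) \<le> 2*K * nm v)"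
    proof (intro ballI impI allI)
      fix y v assume y: "y \<in> sphere l r" "dist y x < 1/(2*K)"
      have yOm: "y \<in> Om" using y assms by (intro sphere_Om) (auto simp: dist_norm norm_minus_commute)
      show "nm (R y v) \<le> 2*K * nm v" using R_local[OF xOm yOm K] y by (simp add: dist_norm)
    qed
    thus "\<exists>e>0. \<exists>M. \<forall>y\<in>sphere l r. dist y x < e \<longrightarrow> (\<forall>v. nm (R y v) \<le> M * nm v)"
      using K(1) by (intro exI[of _ "1/(2*K)"] conjI exI[of _ "2*K"]) auto
  next
    fix y M M' assume "\<forall>v. nm (R y v) \<le> M * nm v" "M \<le> M'"
    thus "\<forall>v. nm (R y v) \<le> M' * nm v" by (meson mult_right_mono nm_nonneg order_trans)
  qed
  then obtain M where M: "\<And>y v. y \<in> sphere l r \<Longrightarrow> nm (R y v) \<le> M * nm v" by blast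
  show ?thesis
  proof (rule that[of "max M 1"])
    show "max M 1 > 0" by simp
    fix z v assume "cmod (z - l) = r"
    hence "z \<in> sphere l r" by (simp add: dist_norm norm_minus_commute)
    hence "nm (R z v) \<le> M * nm v" by (rule M)
    also have "\<dots> \<le> max M 1 * nm v" by (intro mult_right_mono) auto
    finally show "nm (R z v) \<le> max M 1 * nm v" .
  qed
qed

definition res :: "'a \<Rightarrow> 'a \<Rightarrow> complex" where "res u w = residue (f u w) l"

lemma f_int: assumes "0 < r" "r < r0" shows "(f u w has_contour_integral 2*pi*\<i>*res u w) (circlepath l r)"
  unfolding res_def
  by (rule base_residue[of "ball l r0"]) (use assms f_holo in auto)

lemma path_Om: assumes "0 < r" "r < r0" shows "path_image (circlepath l r) \<subseteq> Om"
  using assms by (auto simp: path_image_circlepath dist_norm norm_minus_commute intro!: sphere_Om)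

lemma res_lin: assumes "\<And>z. z \<in> Om \<Longrightarrow> f u w z = a * f u1 w1 z + b * f u2 w2 z"
  shows "res u w = a * res u1 w1 + b * res u2 w2"
proof -
  define r where "r = r0/2"
  have r: "0 < r" "r < r0" using r0 unfolding r_def by auto
  have "((\<lambda>z. a * f u1 w1 z + b * f u2 w2 z) has_contour_integral
        (a * (2*pi*\<i>*res u1 w1) + b * (2*pi*\<i>*res u2 w2))) (circlepath l r)"
    by (intro has_contour_integral_add has_contour_integral_lmul f_int r)
  hence "(f u w has_contour_integral (a * (2*pi*\<i>*res u1 w1) + b * (2*pi*\<i>*res u2 w2))) (circlepath l r)"
  proof (rule has_contour_integral_eq)
    fix x assume "x \<in> path_image (circlepath l r)"
    hence "x \<in> Om" using path_Om[OF r] by blast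
    thus "a * f u1 w1 x + b * f u2 w2 x = f u w x" using assms by simp
  qed
  hence "2*pi*\<i>*res u w = a * (2*pi*\<i>*res u1 w1) + b * (2*pi*\<i>*res u2 w2)"
    using f_int[OF r] has_contour_integral_unique by blast
  hence eq: "(2*pi*\<i>) * res u w = (2*pi*\<i>) * (a * res u1 w1 + b * res u2 w2)" by (simp add: algebra_simps)
  have nz: "(2*pi*\<i>::complex) \<noteq> 0" by simp
  show ?thesis using mult_left_cancel[OF nz] eq by blast
qed

lemma res_addl: "res (u + u') w = res u w + res u' w"
  using res_lin[of "u+u'" w 1 u w 1 u' w] R_lin by (simp add: f_def islin_add ip_addl)
lemma res_scl: "res (sc c u) w = c * res u w"
  using res_lin[of "sc c u" w c u w 0 u w] R_lin by (simp add: f_def islin_sc)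
lemma res_addr: "res u (w + w') = res u w + res u w'"
  using res_lin[of u "w+w'" 1 u w 1 u w'] by (simp add: f_def ip_addr)
lemma res_scr: "res u (sc c w) = cnj c * res u w"
  using res_lin[of u "sc c w" "cnj c" u w 0 u w] by (simp add: f_def)

lemma f_bound: assumes "\<And>v. nm (R z v) \<le> M * nm v" shows "cmod (f u w z) \<le> M * nm u * nm w"
proof -
  have "cmod (f u w z) \<le> nm (R z u) * nm w" unfolding f_def by (rule cauchy_schwarz)
  also have "\<dots> \<le> M * nm u * nm w" using assms[of u] by (intro mult_right_mono) auto
  finally show ?thesis .
qed

lemma res_bound: obtains C where "C \<ge> 0" "\<And>u w. cmod (res u w) \<le> C * nm u * nm w"
proof -
  define r where "r = r0/2"
  have r: "0 < r" "r < r0" using r0 unfolding r_def by auto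
  obtain M where M: "M > 0" "\<And>z v. cmod (z - l) = r \<Longrightarrow> nm (R z v) \<le> M * nm v"
    using sphere_bound[OF r] by blast
  have "cmod (res u w) \<le> r * M * nm u * nm w" for u w
  proof -
    have "cmod (2*pi*\<i>*res u w) \<le> (M * nm u * nm w) * (2*pi*r)"
      by (rule has_contour_integral_bound_circlepath[OF f_int[OF r]]) (use M r f_bound in auto)
    hence "2*pi * cmod (res u w) \<le> 2*pi * (r * M * nm u * nm w)" by (simp add: norm_mult algebra_simps)
    thus ?thesis by (simp add: mult_le_cancel_left_pos)
  qed
  thus ?thesis using that[of "r*M"] r M by (simp add: mult.assoc)
qed

definition P :: "'a \<Rightarrow> 'a" where "P u = (SOME v. \<forall>w. res u w = ip v w)"

lemma P_prop: "res u w = ip (P u) w"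
proof -
  obtain C where C: "C \<ge> 0" "\<And>u w. cmod (res u w) \<le> C * nm u * nm w" using res_bound by blast
  have "\<exists>v. \<forall>w. cnj (res u w) = ip w v"
  proof (rule riesz[where K="C * nm u"])
    show "cnj (res u (x + y)) = cnj (res u x) + cnj (res u y)" for x y by (simp add: res_addr)
    show "cnj (res u (sc a x)) = a * cnj (res u x)" for a x by (simp add: res_scr)
    show "cmod (cnj (res u x)) \<le> C * nm u * nm x" for x using C(2) by simp
  qed
  then obtain v where "\<forall>w. cnj (res u w) = ip w v" by blast
  hence "\<forall>w. res u w = ip v w" by (metis complex_cnj_cnj ip_sym)
  hence "\<forall>w. res u w = ip (P u) w" unfolding P_def by (rule someI)
  thus ?thesis by blast
qed

lemma P_lin: "islin P"
  unfolding islin_def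
  by (auto intro!: ip_ext simp: P_prop[symmetric] res_addl res_scl ip_addl)

abbreviation "As \<equiv> hadj ip A"

lemma P_A: "P (A u) = A (P u)"
proof (rule ip_ext)
  fix w
  have "res (A u) w = res u (As w)"
    using res_lin[of "A u" w 1 u "As w" 0 u w]
    by (simp add: f_def R_comm adj[OF hbA])
  thus "ip (P (A u)) w = ip (A (P u)) w" by (simp add: P_prop adj[OF hbA])
qed

lemma poly_f: "\<exists>e. e holomorphic_on UNIV \<and> (\<forall>z\<in>Om. poly p z * f u w z = f (opoly p A u) w z + e z)"
proof (induction p rule: pCons_induct)
  case 0
  show ?case by (intro exI[of _ "\<lambda>_. 0"]) (auto simp: f_def R_lin islin_zero)
next
  case (pCons a q)
  then obtain e where e: "e holomorphic_on UNIV" "\<forall>z\<in>Om. poly q z * f u w z = f (opoly q A u) w z + e z"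
    by blast
  define v where "v = opoly q A u"
  show ?case
  proof (intro exI[of _ "\<lambda>z. z * e z - ip v w"] conjI ballI)
    show "(\<lambda>z. z * e z - ip v w) holomorphic_on UNIV" using e(1) by (intro holomorphic_intros)
    fix z assume z: "z \<in> Om"
    have fA: "f (A v) w z = ip v w + z * f v w z"
      unfolding f_def using R_comm[OF z] R_A[OF z] by (simp add: ip_addl)
    have "f (opoly (pCons a q) A u) w z = a * f u w z + f (A v) w z"
      unfolding v_def f_def using linA R_lin[OF z] by (simp add: opoly_pCons islin_simps ip_addl)
    have eq: "poly q z * f u w z = f v w z + e z" using e(2) z unfolding v_def by blast
    have "poly (pCons a q) z * f u w z = a * f u w z + z * (poly q z * f u w z)" by (simp add: algebra_simps)
    also have "\<dots> = a * f u w z + z * (f v w z + e z)" by (simp only: eq)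
    also have "\<dots> = a * f u w z + f (A v) w z + (z * e z - ip v w)" by (simp only: fA) (simp add: algebra_simps)
    finally show "poly (pCons a q) z * f u w z = f (opoly (pCons a q) A u) w z + (z * e z - ip v w)"
      using \<open>f (opoly (pCons a q) A u) w z = a * f u w z + f (A v) w z\<close> by simp
  qed
qed

lemma P_opoly: "P (opoly p A u) = opoly p A (P u)"
  by (rule opoly_comm[OF linA P_lin]) (simp add: P_A)

lemma est: assumes r: "0 < r" "r < r0"
  and M: "\<And>z v. cmod (z - l) = r \<Longrightarrow> nm (R z v) \<le> M * nm v" and B: "\<And>z. cmod (z - l) = r \<Longrightarrow> cmod (poly p z) \<le> B"
  and B0: "B \<ge> 0" and M0: "M \<ge> 0"
  shows "nm (opoly p A (P u)) \<le> r * B * M * nm u"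
proof (rule nm_bound_by_ip)
  show "0 \<le> r * B * M * nm u" using r B0 M0 by simp
  fix w
  obtain e where e: "e holomorphic_on UNIV" "\<forall>z\<in>Om. poly p z * f u w z = f (opoly p A u) w z + e z"
    using poly_f[of p u w] by blast
  have I2: "(e has_contour_integral 0) (circlepath l r)"
    by (rule Cauchy_theorem_convex_simple[OF e(1)]) auto
  have "((\<lambda>z. f (opoly p A u) w z + e z) has_contour_integral (2*pi*\<i>*res (opoly p A u) w + 0)) (circlepath l r)"
    by (intro has_contour_integral_add f_int r I2)
  hence I0: "((\<lambda>z. f (opoly p A u) w z + e z) has_contour_integral (2*pi*\<i>*res (opoly p A u) w)) (circlepath l r)"
    by (simp only: add_0_right)
  have I: "((\<lambda>z. poly p z * f u w z) has_contour_integral (2*pi*\<i>*res (opoly p A u) w)) (circlepath l r)"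
  proof (rule has_contour_integral_eq[OF I0])
    fix x assume "x \<in> path_image (circlepath l r)"
    hence "x \<in> Om" using path_Om[OF r] by blast
    thus "f (opoly p A u) w x + e x = poly p x * f u w x" using e(2) by simp
  qed
  have "cmod (2*pi*\<i>*res (opoly p A u) w) \<le> (B * (M * nm u * nm w)) * (2*pi*r)"
  proof (rule has_contour_integral_bound_circlepath[OF I])
    show "0 \<le> B * (M * nm u * nm w)" using B0 M0 by simp
    show "0 < r" using r by simp
    fix z assume z: "cmod (z - l) = r"
    have "cmod (poly p z * f u w z) = cmod (poly p z) * cmod (f u w z)" by (simp add: norm_mult)
    also have "\<dots> \<le> B * (M * nm u * nm w)"
      using B[OF z] f_bound[OF M[OF z], of u w] B0 by (intro mult_mono) auto
    finally show "cmod (poly p z * f u w z) \<le> B * (M * nm u * nm w)" .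
  qed
  hence "2*pi * cmod (res (opoly p A u) w) \<le> 2*pi * (r * B * M * nm u * nm w)" by (simp add: norm_mult algebra_simps)
  hence "cmod (res (opoly p A u) w) \<le> r * B * M * nm u * nm w" by (simp add: mult_le_cancel_left_pos)
  thus "cmod (ip (opoly p A (P u)) w) \<le> r * B * M * nm u * nm w" by (simp add: P_prop P_opoly)
qed

end

context spec begin

definition T :: "'a \<Rightarrow> 'a" where "T x = A x - sc l x"

lemma T_lin: "islin T"
  using linA unfolding islin_def T_def by (simp add: sc_simps algebra_simps)

lemma T_bound: obtains KT where "KT > 0" "\<And>x. nm (T x) \<le> KT * nm x"
proof -
  obtain KA where KA: "KA > 0" "\<And>v. nm (A v) \<le> KA * nm v" using A_bound by blast
  have "nm (T x) \<le> (KA + cmod l) * nm x" for x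
  proof -
    have "nm (T x) \<le> nm (A x) + nm (sc l x)" unfolding T_def by (rule nm_diff_le)
    also have "\<dots> \<le> KA * nm x + cmod l * nm x" using KA(2)[of x] by (simp add: nm_sc)
    finally show ?thesis by (simp add: algebra_simps)
  qed
  thus ?thesis using that[of "KA + cmod l"] KA(1) by (simp add: add_pos_nonneg)
qed

lemma lim_inv2: "(\<lambda>k. 1/(real k + 2)) \<longlonglongrightarrow> 0"
proof -
  have "(\<lambda>n. 1 / real (Suc (Suc n))) \<longlonglongrightarrow> 0" using LIMSEQ_Suc[OF LIMSEQ_Suc[OF lim_1_over_n]] by simp
  thus ?thesis by (simp add: add.commute)
qed

lemma not_spec:
  assumes c: "c > 0" and rho: "\<rho> > 0" "\<rho> \<le> r0"
    and bnd: "\<And>z v. 0 < cmod (z - l) \<Longrightarrow> cmod (z - l) < \<rho> \<Longrightarrow> nm (R z v) \<le> c * nm v"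
  shows "l \<notin> hspectrum sc ip A"
proof -
  define zs where "zs = (\<lambda>k::nat. l + complex_of_real (\<rho> / (real k + 2)))"
  have zsd: "cmod (zs k - l) = \<rho> / (real k + 2)" for k
  proof -
    have "zs k - l = complex_of_real (\<rho> / (real k + 2))" unfolding zs_def by simp
    thus ?thesis using rho by (simp only: norm_of_real) simp
  qed
  have zsr: "0 < cmod (zs k - l)" "cmod (zs k - l) < \<rho>" for k
  proof -
    show "0 < cmod (zs k - l)" unfolding zsd using rho by simp
    have "\<rho> / (real k + 2) < \<rho> / 1" using rho by (intro divide_strict_left_mono) auto
    thus "cmod (zs k - l) < \<rho>" unfolding zsd by simp
  qed
  have zsOm: "zs k \<in> Om" for k using zsr[of k] rho by (auto simp: dist_norm norm_minus_commute)
  have zsb: "nm (R (zs k) v) \<le> c * nm v" for k v using bnd[OF zsr(1)[of k] zsr(2)[of k]] by simp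
  have inj: "nm y \<le> 2*c * nm (T y)" for y
  proof -
    define z where "z = l + complex_of_real (min (\<rho>/2) (1/(2*c)))"
    have zd: "cmod (z - l) = min (\<rho>/2) (1/(2*c))" unfolding z_def using rho c by simp
    have zr: "0 < cmod (z - l)" "cmod (z - l) < \<rho>" "cmod (z - l) \<le> 1/(2*c)" unfolding zd using rho c by auto
    have zOm: "z \<in> Om" using zr rho by (auto simp: dist_norm norm_minus_commute)
    have "y = R z (A y - sc z y)" using R_props(2)[OF zOm] by simp
    hence "nm y \<le> c * nm (A y - sc z y)" using bnd[OF zr(1,2)] by metis
    also have "A y - sc z y = T y - sc (z - l) y" unfolding T_def by (simp add: sc_simps algebra_simps)
    also have "c * nm (T y - sc (z - l) y) \<le> c * (nm (T y) + cmod (z - l) * nm y)"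
      using nm_diff_le[of "T y" "sc (z - l) y"] c by (simp add: nm_sc)
    also have "\<dots> \<le> c * nm (T y) + c * (1/(2*c)) * nm y"
    proof -
      have "cmod (z - l) * nm y \<le> 1/(2*c) * nm y" using zr(3) by (intro mult_right_mono) auto
      hence "c * (cmod (z - l) * nm y) \<le> c * (1/(2*c) * nm y)" using c by (intro mult_left_mono) auto
      hence "c * (cmod (z - l) * nm y) \<le> c * (1/(2*c)) * nm y" by (simp only: mult.assoc)
      thus ?thesis by (simp only: distrib_left mult.assoc add_left_mono)
    qed
    also have "\<dots> = c * nm (T y) + nm y / 2" using c by simp
    finally show ?thesis by simp
  qed
  have conv: "\<exists>L. (\<lambda>k. nm (R (zs k) v - L)) \<longlonglongrightarrow> 0" for v
  proof (rule complete, intro allI impI)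
    fix e :: real assume e: "e > 0"
    define C where "C = 2 * \<rho> * c * c * nm v"
    have C: "C \<ge> 0" unfolding C_def using rho c by simp
    obtain N0 :: nat where N0: "C / e < real N0" using reals_Archimedean2 by blast
    define N where "N = N0"
    have N: "C / e < real N + 2" using N0 unfolding N_def by linarith
    have CN: "C / (real N + 2) < e" using N e C by (simp add: field_simps)
    show "\<exists>N. \<forall>m\<ge>N. \<forall>k\<ge>N. nm (R (zs m) v - R (zs k) v) < e"
    proof (intro exI[of _ N] allI impI)
      fix m k assume mk: "N \<le> m" "N \<le> k"
      have "nm (R (zs m) v - R (zs k) v) = cmod (zs m - zs k) * nm (R (zs m) (R (zs k) v))"
        using R_ident[OF zsOm[of k] zsOm[of m], of v] by (simp add: nm_sc)
      also have "\<dots> \<le> cmod (zs m - zs k) * (c * (c * nm v))"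
      proof (intro mult_left_mono)
        show "nm (R (zs m) (R (zs k) v)) \<le> c * (c * nm v)"
          using zsb[of m "R (zs k) v"] mult_left_mono[OF zsb[of k v] less_imp_le[OF c]] by (rule order_trans)
      qed simp
      also have "cmod (zs m - zs k) \<le> \<rho> / (real m + 2) + \<rho> / (real k + 2)"
        using norm_triangle_ineq4[of "zs m - l" "zs k - l"] zsd by simp
      also have "\<dots> \<le> 2 * \<rho> / (real N + 2)"
      proof -
        have "\<rho> / (real m + 2) \<le> \<rho> / (real N + 2)" "\<rho> / (real k + 2) \<le> \<rho> / (real N + 2)"
          using mk rho by (auto intro!: divide_left_mono)
        thus ?thesis by simp
      qed
      finally have "nm (R (zs m) v - R (zs k) v) \<le> 2 * \<rho> / (real N + 2) * (c * (c * nm v))"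
        using c by (simp add: mult_right_mono)
      also have "\<dots> = C / (real N + 2)" unfolding C_def by simp
      finally show "nm (R (zs m) v - R (zs k) v) < e" using CN by simp
    qed
  qed
  define B where "B v = (SOME L. (\<lambda>k. nm (R (zs k) v - L)) \<longlonglongrightarrow> 0)" for v
  have Bl: "(\<lambda>k. nm (R (zs k) v - B v)) \<longlonglongrightarrow> 0" for v
    unfolding B_def using conv[of v] by (rule someI_ex)
  obtain KT where KT: "KT > 0" "\<And>x. nm (T x) \<le> KT * nm x" using T_bound by blast
  have TB: "T (B v) = v" for v
  proof -
    have b: "nm (T (B v) - v) \<le> KT * nm (R (zs k) v - B v) + \<rho> * c * nm v * (1/(real k + 2))" for k
    proof -
      define Y where "Y = R (zs k) v"
      have "T Y - v = sc (zs k - l) Y" unfolding T_def Y_def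
        using R_props(3)[OF zsOm, of k v] by (simp add: sc_simps algebra_simps)
      hence "nm (T Y - v) = \<rho> / (real k + 2) * nm Y" using zsd[of k] by (simp add: nm_sc)
      moreover have "\<rho> / (real k + 2) * nm Y \<le> \<rho> / (real k + 2) * (c * nm v)"
        using zsb[of k v] rho unfolding Y_def by (intro mult_left_mono) auto
      ultimately have n1: "nm (T Y - v) \<le> \<rho> / (real k + 2) * (c * nm v)" by simp
      have "T (B v) - v = T (B v - Y) + (T Y - v)" using T_lin by (simp add: islin_simps)
      hence "nm (T (B v) - v) \<le> nm (T (B v - Y)) + nm (T Y - v)" using nm_triangle by metis
      also have "\<dots> \<le> KT * nm (Y - B v) + \<rho> / (real k + 2) * (c * nm v)"
        using KT(2)[of "B v - Y"] n1 nm_commute[of "B v" Y] by simp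
      finally show ?thesis unfolding Y_def by simp
    qed
    have "(\<lambda>k. KT * nm (R (zs k) v - B v) + \<rho> * c * nm v * (1/(real k + 2))) \<longlonglongrightarrow> KT * 0 + \<rho> * c * nm v * 0"
      by (intro tendsto_add tendsto_mult tendsto_const Bl lim_inv2)
    hence "nm (T (B v) - v) \<le> 0" using b by (intro LIMSEQ_le_const[of "\<lambda>k. KT * nm (R (zs k) v - B v) + \<rho> * c * nm v * (1/(real k + 2))"]) auto
    hence "nm (T (B v) - v) = 0" using nm_nonneg[of "T (B v) - v"] by linarith
    thus ?thesis by simp
  qed
  have injT: "x = y" if "T x = T y" for x y
  proof -
    have "nm (x - y) \<le> 2*c * nm (T (x - y))" by (rule inj)
    also have "T (x - y) = 0" using that T_lin by (simp add: islin_simps)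
    finally have "nm (x - y) = 0" using nm_nonneg[of "x - y"] by simp
    thus ?thesis by simp
  qed
  have hbB: "hbounded sc ip B"
    unfolding hbounded_def
  proof (intro conjI allI exI)
    fix x y show "B (x + y) = B x + B y" by (rule injT) (use TB T_lin in \<open>simp add: islin_simps\<close>)
  next
    fix a x show "B (sc a x) = sc a (B x)" by (rule injT) (use TB T_lin in \<open>simp add: islin_simps\<close>)
  next
    fix x show "nm (B x) \<le> 2*c * nm x" using inj[of "B x"] TB by simp
  qed
  have left: "B (A x - sc l x) = x" for x
  proof -
    have "B (T x) = x" by (rule injT) (simp add: TB)
    thus ?thesis by (simp add: T_def)
  qed
  have right: "A (B x) - sc l (B x) = x" for x using TB unfolding T_def by simp
  show ?thesis unfolding hspectrum_def using hbB left right by blast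
qed

lemma P_nonzero: assumes "l \<in> hspectrum sc ip A" shows "\<exists>u. P u \<noteq> 0"
proof (rule ccontr)
  assume "\<not> (\<exists>u. P u \<noteq> 0)"
  hence P0: "P u = 0" for u by blast
  define r where "r = r0/2"
  have r: "0 < r" "r < r0" using r0 unfolding r_def by auto
  obtain M where M: "M > 0" "\<And>z v. cmod (z - l) = r \<Longrightarrow> nm (R z v) \<le> M * nm v"
    using sphere_bound[OF r] by blast
  have bnd: "nm (R z v) \<le> 2*M * nm v" if z: "0 < cmod (z - l)" "cmod (z - l) < r/2" for z v
  proof (rule nm_bound_by_ip)
    show "0 \<le> 2*M*nm v" using M by simp
    fix w
    have zOm: "z \<in> Om" using z r by (auto simp: dist_norm norm_minus_commute)
    have I1: "(f (R z v) w has_contour_integral 0) (circlepath l r)"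
      using f_int[OF r, of "R z v" w] by (simp add: P_prop P0)
    have I2: "((\<lambda>\<xi>. f v w z / (\<xi> - z)) has_contour_integral (2 * of_real pi * \<i> * f v w z)) (circlepath l r)"
      by (rule Cauchy_integral_circlepath_simple[where f="\<lambda>_. f v w z"]) (use z r in auto)
    have I3: "((\<lambda>\<xi>. f (R z v) w \<xi> + f v w z / (\<xi> - z)) has_contour_integral (0 + 2 * of_real pi * \<i> * f v w z)) (circlepath l r)"
      by (rule has_contour_integral_add[OF I1 I2])
    have I: "((\<lambda>\<xi>. f v w \<xi> / (\<xi> - z)) has_contour_integral (2 * of_real pi * \<i> * f v w z)) (circlepath l r)"
    proof (rule has_contour_integral_eq[OF I3[simplified]])
      fix \<xi> assume "\<xi> \<in> path_image (circlepath l r)"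
      hence xi: "\<xi> \<in> Om" "cmod (\<xi> - l) = r" using path_Om[OF r] r by (auto simp: dist_norm norm_minus_commute)
      have ne: "\<xi> - z \<noteq> 0" using xi(2) z r by auto
      have "f v w \<xi> = f v w z + (\<xi> - z) * f (R z v) w \<xi>"
        unfolding f_def using R_ident[OF zOm xi(1), of v] by (simp add: diff_eq_eq ip_addl)
      thus "f (R z v) w \<xi> + f v w z / (\<xi> - z) = f v w \<xi> / (\<xi> - z)" using ne by (simp add: field_simps)
    qed
    have "cmod (2 * of_real pi * \<i> * f v w z) \<le> (M * nm v * nm w / (r/2)) * (2*pi*r)"
    proof (rule has_contour_integral_bound_circlepath[OF I])
      show "0 \<le> M * nm v * nm w / (r/2)" using M r by simp
      show "0 < r" using r by simp
      fix \<xi> assume xi: "cmod (\<xi> - l) = r"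
      have d: "cmod (\<xi> - z) \<ge> r/2"
        using norm_triangle_ineq2[of "\<xi> - l" "z - l"] xi z by simp
      have "cmod (f v w \<xi> / (\<xi> - z)) = cmod (f v w \<xi>) / cmod (\<xi> - z)" by (simp add: norm_divide)
      also have "\<dots> \<le> (M * nm v * nm w) / (r/2)"
        using f_bound[OF M(2)[OF xi], of v w] d r M by (intro frac_le) auto
      finally show "cmod (f v w \<xi> / (\<xi> - z)) \<le> M * nm v * nm w / (r/2)" .
    qed
    hence "2*pi * cmod (f v w z) \<le> 2*pi * (2*M * nm v * nm w)" using r by (simp add: norm_mult field_simps)
    hence "cmod (f v w z) \<le> 2*M * nm v * nm w" by (simp add: mult_le_cancel_left_pos)
    thus "cmod (ip (R z v) w) \<le> 2*M * nm v * nm w" unfolding f_def .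
  qed
  have "l \<notin> hspectrum sc ip A"
    by (rule not_spec[of "2*M" "r/2"]) (use M r bnd in auto)
  thus False using assms by simp
qed

end

definition Qpoly :: "complex \<Rightarrow> nat \<Rightarrow> complex poly" where
  "Qpoly l n = (\<Sum>i<n. monom (l^(n - Suc i)) i)"

lemma Q_id: "[:-l,1:] * Qpoly l n = [:0,1:]^n - [:l^n:]"
proof -
  have "poly ([:-l,1:] * Qpoly l n) z = poly ([:0,1:]^n - [:l^n:]) z" for z
    by (simp add: Qpoly_def poly_sum poly_monom power_diff_sumr2[of z n l] mult.commute left_diff_distrib)
  thus ?thesis using poly_eq_poly_eq_iff by blast
qed

lemma Q_at: "poly (Qpoly l n) l = of_nat n * l^(n-1)"
proof -
  have "l^(n - Suc i) * l^i = l^(n-1)" if "i < n" for i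
    using that by (simp add: power_add[symmetric])
  hence "poly (Qpoly l n) l = (\<Sum>i<n. l^(n-1))" unfolding Qpoly_def
    by (simp add: poly_sum poly_monom)
  thus ?thesis by simp
qed

lemma poly_bound_cball: "\<exists>C\<ge>0. \<forall>z. cmod (z - l) \<le> 1 \<longrightarrow> cmod (poly p z) \<le> C"
proof -
  have "compact (poly p ` cball l 1)"
    by (intro compact_continuous_image continuous_on_poly continuous_on_id) simp
  then obtain C where C: "\<forall>y\<in>poly p ` cball l 1. norm y \<le> C"
    using compact_imp_bounded bounded_iff by blast
  have "\<forall>z. cmod (z - l) \<le> 1 \<longrightarrow> cmod (poly p z) \<le> max C 0"
    using C by (auto simp: dist_norm norm_minus_commute intro: le_max_iff_disj[THEN iffD2])
  thus ?thesis by (intro exI[of _ "max C 0"]) auto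
qed

lemma logconv_seq:
  fixes s :: "nat \<Rightarrow> real"
  assumes nn: "\<And>k. s k \<ge> 0" and lc: "\<And>k. (s (Suc k))^2 \<le> s (Suc (Suc k)) * s k"
    and s0: "s 0 > 0" and s1: "s 1 > 0"
  shows "s k \<ge> (s 1 / s 0)^k * s 0"
proof -
  have main: "s k > 0 \<and> s (Suc k) * s 0 \<ge> s 1 * s k" for k
  proof (induction k)
    case 0 thus ?case using s0 by simp
  next
    case (Suc k)
    hence pk: "s k > 0" and rk: "s (Suc k) * s 0 \<ge> s 1 * s k" by auto
    have pk1: "s (Suc k) > 0"
    proof -
      have "s 1 * s k > 0" using s1 pk by simp
      hence "s (Suc k) * s 0 > 0" using rk by linarith
      thus ?thesis using s0 nn[of "Suc k"] by (simp add: zero_less_mult_iff)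
    qed
    have "s (Suc (Suc k)) * s 0 * s k \<ge> (s (Suc k))^2 * s 0"
      using mult_right_mono[OF lc[of k] less_imp_le[OF s0]] by (simp add: algebra_simps)
    also have "(s (Suc k))^2 * s 0 = s (Suc k) * (s (Suc k) * s 0)" by (simp add: power2_eq_square)
    also have "\<dots> \<ge> s (Suc k) * (s 1 * s k)" using rk pk1 by (intro mult_left_mono) auto
    finally have "s (Suc (Suc k)) * s 0 * s k \<ge> (s 1 * s (Suc k)) * s k" by (simp add: algebra_simps)
    hence "s (Suc (Suc k)) * s 0 \<ge> s 1 * s (Suc k)" using pk by (simp add: mult_le_cancel_right)
    thus ?case using pk1 by simp
  qed
  show ?thesis
  proof (induction k)
    case 0 thus ?case by simp
  next
    case (Suc k)
    have "s (Suc k) \<ge> (s 1 / s 0) * s k"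
      using main[of k] s0 by (simp add: field_simps)
    moreover have "(s 1 / s 0) * s k \<ge> (s 1 / s 0) * ((s 1 / s 0)^k * s 0)"
      using Suc s0 s1 by (intro mult_left_mono) auto
    ultimately show ?case by (simp add: algebra_simps)
  qed
qed

locale nspec = spec +
  fixes n :: nat
  assumes n1: "n \<ge> 1" and comm: "hadj ip A \<circ> (A^^n) = (A^^n) \<circ> hadj ip A"
begin

definition Tn :: "'a \<Rightarrow> 'a" where "Tn x = (A^^n) x - sc (l^n) x"
definition Tns :: "'a \<Rightarrow> 'a" where "Tns y = (As^^n) y - sc (cnj (l^n)) y"

lemma As_lin: "islin As" using adj_islin[OF hbA] .
lemma N_lin: "islin (A^^n)" using islin_funpow[OF linA] .
lemma Ns_lin: "islin (As^^n)" using islin_funpow[OF As_lin] .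

lemma Tn_lin: "islin Tn"
  using N_lin unfolding islin_def Tn_def by (simp add: sc_simps algebra_simps)
lemma Tns_lin: "islin Tns"
  using Ns_lin unfolding islin_def Tns_def by (simp add: sc_simps algebra_simps)

lemma comm_pt: "As ((A^^n) x) = (A^^n) (As x)"
  using comm by (metis comp_apply)

lemma commk: "(As^^k) ((A^^n) x) = (A^^n) ((As^^k) x)"
  by (induction k) (simp_all add: comm_pt)

lemma adjT: "ip (Tn x) y = ip x (Tns y)"
  unfolding Tn_def Tns_def by (simp add: ip_simps adj_funpow[OF hbA])

lemma TnsTn: "Tns (Tn y) = Tn (Tns y)"
  unfolding Tn_def Tns_def using N_lin Ns_lin commk[of n]
  by (simp add: islin_simps sc_simps algebra_simps)

lemma normal_nm: "nm (Tns y) = nm (Tn y)"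
proof -
  have a: "ip (Tn y) (Tn y) = ip y (Tns (Tn y))" by (rule adjT)
  have b: "ip (Tn (Tns y)) y = ip (Tns y) (Tns y)" by (rule adjT)
  have "ip y (Tns (Tn y)) = cnj (ip (Tns y) (Tns y))" using b TnsTn ip_sym by metis
  hence "Re (ip (Tn y) (Tn y)) = Re (ip (Tns y) (Tns y))" using a by simp
  thus ?thesis by (simp add: nm_def')
qed

lemma logconv: "(nm ((Tn^^Suc k) x))^2 \<le> nm ((Tn^^Suc (Suc k)) x) * nm ((Tn^^k) x)"
proof -
  define a where "a = (Tn^^k) x"
  have "(nm (Tn a))^2 = Re (ip (Tn a) (Tn a))" by (rule nm_sq)
  also have "\<dots> = Re (ip a (Tns (Tn a)))" by (simp add: adjT)
  also have "\<dots> \<le> cmod (ip a (Tns (Tn a)))" by (rule complex_Re_le_cmod)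
  also have "\<dots> \<le> nm a * nm (Tns (Tn a))" by (rule cauchy_schwarz)
  also have "\<dots> = nm (Tn (Tn a)) * nm a" by (simp add: normal_nm)
  finally show ?thesis unfolding a_def by simp
qed

abbreviation "G \<equiv> [:0,1:]^n - [:l^n:]"

lemma Tn_opoly: "Tn x = opoly G A x"
  unfolding Tn_def by (simp add: opoly_diff[OF linA] opoly_Xpow[OF linA] opoly_const[OF linA])

lemma Tn_pow: "(Tn^^k) x = opoly (G^k) A x"
proof -
  have "Tn = opoly G A" using Tn_opoly by auto
  thus ?thesis by (simp add: opoly_power[OF linA])
qed

lemma polyG: "poly G z = (z - l) * poly (Qpoly l n) z"
proof -
  have "poly G z = poly ([:-l,1:] * Qpoly l n) z" by (simp only: Q_id)
  thus ?thesis by (simp add: left_diff_distrib)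
qed

lemma Tn_kill: "Tn (P u) = 0"
proof (rule ccontr)
  assume ne: "Tn (P u) \<noteq> 0"
  define x where "x = P u"
  define s where "s k = nm ((Tn^^k) x)" for k
  have s1: "s 1 > 0" unfolding s_def x_def using ne by (simp add: nm_pos)
  have xne: "x \<noteq> 0" using ne Tn_lin islin_zero unfolding x_def by metis
  have s0: "s 0 > 0" unfolding s_def using xne by (simp add: nm_pos)
  define q where "q = s 1 / s 0"
  have q: "q > 0" unfolding q_def using s0 s1 by simp
  have low: "s k \<ge> q^k * s 0" for k
    unfolding q_def by (rule logconv_seq) (use s0 s1 logconv in \<open>auto simp: s_def\<close>)
  obtain CQ where CQ: "CQ \<ge> 0" "\<And>z. cmod (z - l) \<le> 1 \<Longrightarrow> cmod (poly (Qpoly l n) z) \<le> CQ"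
    using poly_bound_cball by blast
  define r where "r = min (min (r0/2) 1) (q / (2*(CQ+1)))"
  have r: "0 < r" "r < r0" "r \<le> 1" "r \<le> q / (2*(CQ+1))" unfolding r_def using r0 q CQ by auto
  have rC: "r * CQ \<le> q / 2"
  proof -
    have "r * CQ \<le> q / (2*(CQ+1)) * CQ" using r(4) CQ(1) by (intro mult_right_mono) auto
    also have "\<dots> \<le> q / (2*(CQ+1)) * (CQ + 1)" using q CQ(1) by (intro mult_left_mono) auto
    also have "\<dots> = q / 2" using CQ(1) by (simp add: field_simps)
    finally show ?thesis .
  qed
  obtain M where M: "M > 0" "\<And>z v. cmod (z - l) = r \<Longrightarrow> nm (R z v) \<le> M * nm v"
    using sphere_bound[OF r(1,2)] by blast
  have up: "s k \<le> r * (r * CQ)^k * M * nm u" for k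
  proof -
    have "nm (opoly (G^k) A (P u)) \<le> r * (r * CQ)^k * M * nm u"
    proof (rule est[OF r(1,2) M(2)])
      fix z assume z: "cmod (z - l) = r"
      have "poly (G^k) z = (poly G z)^k" by (simp only: poly_power)
      hence "cmod (poly (G^k) z) = (cmod (z - l) * cmod (poly (Qpoly l n) z))^k"
        by (simp only: polyG norm_mult norm_power)
      also have "\<dots> \<le> (r * CQ)^k"
        using z CQ(2)[of z] r(3) by (intro power_mono mult_mono) auto
      finally show "cmod (poly (G^k) z) \<le> (r * CQ)^k" .
    qed (use r CQ M in auto)
    thus ?thesis unfolding s_def x_def Tn_pow .
  qed
  define C where "C = r * M * nm u / s 0"
  obtain k where k: "C < 2^k" using real_arch_pow[of 2 C] by auto
  have "q^k * s 0 \<le> r * (q/2)^k * M * nm u"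
  proof -
    have "(r * CQ)^k \<le> (q/2)^k" using rC r CQ by (intro power_mono) auto
    hence "r * (r * CQ)^k * M * nm u \<le> r * (q/2)^k * M * nm u"
      using r M by (intro mult_right_mono mult_left_mono) auto
    thus ?thesis using low[of k] up[of k] by linarith
  qed
  hence "2^k * (q/2)^k * s 0 \<le> (r * M * nm u) * (q/2)^k"
    by (simp add: power_mult_distrib[symmetric] algebra_simps)
  hence "2^k * s 0 \<le> r * M * nm u" using q by (simp add: algebra_simps)
  hence "2^k \<le> C" unfolding C_def using s0 by (simp add: field_simps)
  thus False using k by simp
qed

end

context nspec begin

lemma eigen: assumes "P u \<noteq> 0" shows "heigenvalue sc A l"
proof -
  define x where "x = P u"
  have xne: "x \<noteq> 0" using assms x_def by simp
  have Nx: "(A^^n) x = sc (l^n) x" using Tn_kill[of u] unfolding Tn_def x_def by simp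
  show ?thesis
  proof (cases "l = 0")
    case True
    have Nx0: "(A^^n) x = 0" using Nx True n1 by (simp add: zero_power)
    define m where "m = (LEAST m. (A^^m) x = 0)"
    have m: "(A^^m) x = 0" unfolding m_def using Nx0 by (rule LeastI)
    have m0: "m \<noteq> 0" using m xne by (cases m) auto
    have y: "(A^^(m-1)) x \<noteq> 0"
    proof
      assume "(A^^(m-1)) x = 0"
      hence "m \<le> m - 1" unfolding m_def by (rule Least_le)
      thus False using m0 by simp
    qed
    have "A ((A^^(m-1)) x) = (A^^m) x" using m0 by (cases m) auto
    hence "A ((A^^(m-1)) x) = sc l ((A^^(m-1)) x)" using m True by simp
    thus ?thesis unfolding heigenvalue_def using y by blast
  next
    case False
    define Q where "Q = Qpoly l n"
    define y where "y = opoly Q A x"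
    define Ql where "Ql = poly Q l"
    have Ql: "Ql \<noteq> 0" unfolding Ql_def Q_def Q_at using False n1 by simp
    have "opoly [:-l,1:] A y = opoly ([:-l,1:] * Q) A x" unfolding y_def
      by (simp only: opoly_mult[OF linA])
    also have "\<dots> = opoly G A x" by (simp only: Q_def Q_id)
    also have "\<dots> = 0" using Tn_kill[of u] Tn_opoly unfolding x_def by simp
    finally have "sc (-l) y + A y = 0" using linA by (simp add: opoly_pCons opoly_const islin_zero)
    hence Ay: "A y = sc l y" by (simp add: sc_minus_l add_eq_0_iff)
    have yne: "y \<noteq> 0"
    proof
      assume y0: "y = 0"
      have "poly (Q - [:Ql:]) l = 0" unfolding Ql_def by simp
      then obtain S where S: "Q - [:Ql:] = [:-l,1:] * S" using poly_eq_0_iff_dvd by (metis dvdE)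
      define h where "h = smult (-1/Ql) ([:-l,1:] * S)"
      have Qs: "Q = [:Ql:] + [:-l,1:] * S" using S by (simp add: algebra_simps)
      have "opoly Q A x = 0" using y0 y_def by simp
      hence "sc Ql x + opoly ([:-l,1:] * S) A x = 0" unfolding Qs using linA
        by (simp add: opoly_add opoly_const)
      hence e1: "opoly ([:-l,1:] * S) A x = - sc Ql x" by (simp add: add_eq_0_iff)
      have "opoly h A x = sc (-1/Ql) (opoly ([:-l,1:] * S) A x)" by (simp only: h_def opoly_smult[OF linA])
      also have "\<dots> = sc (-1/Ql) (- sc Ql x)" by (simp only: e1)
      also have "\<dots> = x" using Ql by (simp add: sc_minus_r sc_minus_l)
      finally have hx: "opoly h A x = x" .
      have hk: "opoly (h^k) A x = x" for k
      proof (induction k)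
        case 0 thus ?case using opoly_const[OF linA, of 1 x] by (simp add: pCons_one)
      next
        case (Suc k) thus ?case using hx by (simp add: opoly_mult[OF linA])
      qed
      obtain CS where CS: "CS \<ge> 0" "\<And>z. cmod (z - l) \<le> 1 \<Longrightarrow> cmod (poly S z) \<le> CS"
        using poly_bound_cball by blast
      define r where "r = min (min (r0/2) 1) (cmod Ql / (2*(CS+1)))"
      have r: "0 < r" "r < r0" "r \<le> 1" "r \<le> cmod Ql / (2*(CS+1))" unfolding r_def using r0 Ql CS by auto
      obtain M where M: "M > 0" "\<And>z v. cmod (z - l) = r \<Longrightarrow> nm (R z v) \<le> M * nm v"
        using sphere_bound[OF r(1,2)] by blast
      have hb: "cmod (poly h z) \<le> 1/2" if z: "cmod (z - l) = r" for z
      proof -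
        have "poly h z = (-1/Ql) * ((z - l) * poly S z)" unfolding h_def by (simp add: algebra_simps)
        hence "cmod (poly h z) = cmod (z - l) * cmod (poly S z) / cmod Ql"
          by (simp add: norm_mult norm_divide)
        also have "\<dots> \<le> r * CS / cmod Ql"
          using z CS(2)[of z] r(3) Ql by (intro divide_right_mono mult_mono) auto
        also have "\<dots> \<le> cmod Ql / (2*(CS+1)) * (CS + 1) / cmod Ql"
          using r(4) CS(1) Ql by (intro divide_right_mono mult_mono) auto
        also have "\<dots> = 1/2"
        proof -
          have pos: "CS + 1 > 0" using CS(1) by simp
          have eqa: "cmod Ql / (2*(CS+1)) * (CS+1) = cmod Ql / 2" using pos by (simp add: field_simps)
          show ?thesis by (subst eqa) (use Ql in simp)
        qed
        finally show ?thesis .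
      qed
      have up: "nm x \<le> r * (1/2)^k * M * nm u" for k
      proof -
        have "nm (opoly (h^k) A (P u)) \<le> r * (1/2)^k * M * nm u"
        proof (rule est[OF r(1,2) M(2)])
          fix z assume z: "cmod (z - l) = r"
          have "cmod (poly (h^k) z) = (cmod (poly h z))^k" by (simp add: norm_power)
          also have "\<dots> \<le> (1/2)^k" using hb[OF z] by (intro power_mono) auto
          finally show "cmod (poly (h^k) z) \<le> (1/2)^k" .
        qed (use r M in auto)
        thus ?thesis using hk unfolding x_def by simp
      qed
      have xpos: "nm x > 0" using xne by (simp add: nm_pos)
      have den: "r * M * nm u + 1 > 0" using r M by (intro add_nonneg_pos mult_nonneg_nonneg) auto
      obtain k where k: "(1/2::real)^k < nm x / (r * M * nm u + 1)"
        using real_arch_pow_inv[of "nm x / (r * M * nm u + 1)" "1/2"] xpos den by auto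
      have "r * (1/2)^k * M * nm u \<le> (r * M * nm u + 1) * (1/2)^k" by (simp add: algebra_simps)
      also have "\<dots> < (r * M * nm u + 1) * (nm x / (r * M * nm u + 1))"
        using k den by (intro mult_strict_left_mono) auto
      also have "\<dots> = nm x" using den by simp
      finally show False using up[of k] by simp
    qed
    show ?thesis unfolding heigenvalue_def using yne Ay by blast
  qed
qed

end

theorem corollary3p2:
  fixes sc :: "complex \<Rightarrow> 'a::ab_group_add \<Rightarrow> 'a"
    and ip :: "'a \<Rightarrow> 'a \<Rightarrow> complex"
    and A :: "'a \<Rightarrow> 'a"
    and n :: nat
  assumes "chilbert sc ip"
    and "hinfdim sc"
    and "n > 1"
    and "hbounded sc ip A"
    and "hadj ip A \<circ> (A ^^ n) = (A ^^ n) \<circ> hadj ip A"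
  shows "isoloid sc ip A"
  unfolding isoloid_def
proof (intro allI impI)
  fix l assume iso: "l isolated_in hspectrum sc ip A"
  then obtain U where U: "l \<in> hspectrum sc ip A" "open U" "U \<inter> hspectrum sc ip A = {l}"
    unfolding isolated_in_def by blast
  have "l \<in> U" using U by blast
  then obtain r0 where r0: "r0 > 0" "ball l r0 \<subseteq> U" using U(2) open_contains_ball by blast
  interpret nspec sc ip A l r0 n
  proof unfold_locales
    show "chilbert sc ip" by fact
    show "hbounded sc ip A" by fact
    show "r0 > 0" by fact
    show "z \<notin> hspectrum sc ip A" if "z \<in> ball l r0 - {l}" for z using that r0(2) U(3) by blast
    show "n \<ge> 1" using assms(3) by simp
    show "hadj ip A \<circ> (A ^^ n) = (A ^^ n) \<circ> hadj ip A" by fact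
  qed
  obtain u where "P u \<noteq> 0" using P_nonzero[OF U(1)] by blast
  thus "heigenvalue sc A l" by (rule eigen)
qed

end
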